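(* Let $D$ be a friendship digraph. If there is a vertex $v$ of $D$ such that $N^+(v)=V(D)-\{v\}$, then every vertex of $D$ other than $v$ has outdegree $2$.
   Context: All digraphs are finite and have neither loops nor parallel arcs (a pair of opposite arcs $(u,v)$ and $(v,u)$ is allowed). $N^+(v)$ denotes the set of out-neighbors of $v$. A friendship digraph is a nontrivial digraph (at least two vertices) in which any two distinct vertices have exactly one common out-neighbor. *)

theory Defs
  imports Main
begin

definition digraph :: "'a set \<Rightarrow> ('a \<times> 'a) set \<Rightarrow> bool" where
  "digraph V A \<longleftrightarrow> finite V \<and> A \<subseteq> V \<times> V \<and> (\<forall>v. (v, v) \<notin> A)"

definition out_nbrs :: "('a \<times> 'a) set \<Rightarrow> 'a \<Rightarrow> 'a set" where
  "out_nbrs A v = {w. (v, w) \<in> A}"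

definition outdeg :: "('a \<times> 'a) set \<Rightarrow> 'a \<Rightarrow> nat" where
  "outdeg A v = card (out_nbrs A v)"

definition friendship_digraph :: "'a set \<Rightarrow> ('a \<times> 'a) set \<Rightarrow> bool" where
  "friendship_digraph V A \<longleftrightarrow> digraph V A \<and> card V \<ge> 2 \<and>
     (\<forall>x\<in>V. \<forall>y\<in>V. x \<noteq> y \<longrightarrow> (\<exists>!z. z \<in> out_nbrs A x \<inter> out_nbrs A y))"

end

theory Submission
  imports Defs
begin

theorem corollary2p3:
  assumes "friendship_digraph V A"
    and "v \<in> V"
    and "out_nbrs A v = V - {v}"
  shows "\<forall>u\<in>V - {v}. outdeg A u = 2"
proof
  fix u assume u: "u \<in> V - {v}"
  have AV: "A \<subseteq> V \<times> V" and nl: "\<And>x. (x, x) \<notin> A"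
    using assms(1) unfolding friendship_digraph_def digraph_def by auto
  have fr: "\<And>x y. x \<in> V \<Longrightarrow> y \<in> V \<Longrightarrow> x \<noteq> y \<Longrightarrow> \<exists>!z. z \<in> out_nbrs A x \<inter> out_nbrs A y"
    using assms(1) unfolding friendship_digraph_def by blast
  have vA: "\<And>z. (v, z) \<in> A \<longleftrightarrow> z \<in> V \<and> z \<noteq> v"
    using assms(3) unfolding out_nbrs_def by blast
  obtain w where w: "(u, w) \<in> A" "(v, w) \<in> A"
    and wu: "\<And>z. (u, z) \<in> A \<Longrightarrow> (v, z) \<in> A \<Longrightarrow> z = w"
    using fr[OF _ assms(2), of u] u unfolding out_nbrs_def by blast
  have wV: "w \<in> V" "w \<noteq> v" "w \<noteq> u" using w AV nl vA by auto
  have uv: "(u, v) \<in> A"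
  proof (rule ccontr)
    assume nuv: "(u, v) \<notin> A"
    obtain z where z: "(u, z) \<in> A" "(w, z) \<in> A"
      using fr[of u w] u wV unfolding out_nbrs_def by blast
    have "z \<in> V" using z AV by auto
    have "z \<noteq> v" using z nuv by auto
    then have "z = w" using wu z `z \<in> V` vA by auto
    then show False using z nl by auto
  qed
  have "out_nbrs A u = {v, w}"
  proof
    show "{v, w} \<subseteq> out_nbrs A u" using uv w unfolding out_nbrs_def by auto
    show "out_nbrs A u \<subseteq> {v, w}"
    proof
      fix z assume "z \<in> out_nbrs A u"
      then have "(u, z) \<in> A" unfolding out_nbrs_def by auto
      moreover have "z \<in> V" using calculation AV by auto
      ultimately show "z \<in> {v, w}" using wu vA by auto
    qed
  qed
  then show "outdeg A u = 2" unfolding outdeg_def using wV by auto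
qed

end
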